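(* Consider a smooth and decomposable probabilistic circuit defining $p(\mathbf{y}\mid\mathcal{Q},\mathcal{X})$ for every forecasting query $\mathcal{Q}$ and observation set $\mathcal{X}$, such that: (1) each leaf node is a distribution over exactly the variables $\mathbf{y}_c$ of the queries belonging to a single input channel $c$; (2) each leaf distribution over $\mathbf{y}_c$ depends on the query only through the subset $\mathcal{Q}_c$ of queries belonging to channel $c$ (and on $\mathcal{X}$); (3) the weights of the sum nodes do not depend on the query $\mathcal{Q}$ (they may depend on $\mathcal{X}$). Then for every channel $c$, $$\int p(\mathbf{y}\mid\mathcal{Q},\mathcal{X})\,d\mathbf{y}_c=p(\mathbf{y}_{-c}\mid\mathcal{Q}_{-c},\mathcal{X}),$$ where $\mathbf{y}_{-c}=\mathbf{y}\setminus\mathbf{y}_c$ and $\mathcal{Q}_{-c}=\mathcal{Q}\setminus\mathcal{Q}_c$; i.e. the circuit is marginalization consistent up to the leaf nodes (with respect to removing whole channels).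
   Context: Observations $\mathcal{X}=((t_n,c_n,y_n))_{n=1}^N$ with $(t_n,c_n,y_n)\in\mathbb{R}\times\{1,\dots,C\}\times\mathbb{R}$; a query $\mathcal{Q}=((t_m^{\mathrm{qry}},c_m^{\mathrm{qry}}))_{m}$ with targets $\mathbf{y}$. For channel $c$, $\mathcal{Q}_c$ denotes the queries with channel index $c$ and $\mathbf{y}_c$ the corresponding targets; the sets $\mathbf{y}_c$ partition $\mathbf{y}$. A probabilistic circuit is a rooted DAG with leaf nodes (normalized densities over a subset of variables, its scope), sum nodes computing $\sum_{k\in ch(n)}w_{n,k}p_k$ with $w_{n,k}\ge 0$, $\sum_k w_{n,k}=1$, and product nodes computing $\prod_{k\in ch(n)}p_k$; the scope of an inner node is the union of its children's scopes. Smoothness: all children of a sum node have the same scope. Decomposability: children of a product node have pairwise disjoint scopes. The circuit structure is fixed and does not depend on $\mathcal{Q}$; when $\mathcal{Q}_c$ is empty the leaves of channel $c$ are the constant $1$. *)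

theory Defs
  imports "HOL-Analysis.Analysis"
begin

text \<open>Observations X: list of (time, channel, value); queries Q: list of (time, channel);
  targets ys: real list with one entry per query.\<close>
type_synonym obs = "(real \<times> nat \<times> real) list"
type_synonym qry = "(real \<times> nat) list"

text \<open>A leaf of channel c carries a family of densities  f X Qc yc  over the targets yc of
  the channel-c queries Qc (conditioned on X); sum nodes carry weights depending on X only.\<close>
datatype pc =
    Leaf nat "obs \<Rightarrow> qry \<Rightarrow> real list \<Rightarrow> real"
  | SumN "((obs \<Rightarrow> real) \<times> pc) list"
  | ProdN "pc list"

fun scope :: "pc \<Rightarrow> nat set" where
  "scope (Leaf c f) = {c}"
| "scope (SumN cs) = (\<Union>p\<in>set cs. scope (snd p))"
| "scope (ProdN cs) = (\<Union>k\<in>set cs. scope k)"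

inductive smooth :: "pc \<Rightarrow> bool" where
  "smooth (Leaf c f)"
| "(\<forall>p\<in>set cs. smooth (snd p)) \<Longrightarrow> (\<forall>p\<in>set cs. \<forall>q\<in>set cs. scope (snd p) = scope (snd q))
     \<Longrightarrow> smooth (SumN cs)"
| "(\<forall>k\<in>set cs. smooth k) \<Longrightarrow> smooth (ProdN cs)"

inductive decomposable :: "pc \<Rightarrow> bool" where
  "decomposable (Leaf c f)"
| "(\<forall>p\<in>set cs. decomposable (snd p)) \<Longrightarrow> decomposable (SumN cs)"
| "(\<forall>k\<in>set cs. decomposable k) \<Longrightarrow>
     (\<forall>i<length cs. \<forall>j<length cs. i \<noteq> j \<longrightarrow> scope (cs ! i) \<inter> scope (cs ! j) = {})
     \<Longrightarrow> decomposable (ProdN cs)"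

text \<open>f X is a normalized density for channel c: for every list qs of channel-c queries
  (of length k) it is a measurable, nonnegative function on R^k integrating to 1.
  For qs = [] this says f X [] [] = 1 (the constant leaf).\<close>
definition leaf_density :: "nat \<Rightarrow> obs \<Rightarrow> (obs \<Rightarrow> qry \<Rightarrow> real list \<Rightarrow> real) \<Rightarrow> bool" where
  "leaf_density c X f \<longleftrightarrow>
     (\<forall>qs. (\<forall>q\<in>set qs. snd q = c) \<longrightarrow>
        (\<lambda>z. f X qs (map z [0..<length qs])) \<in> borel_measurable (PiM {..<length qs} (\<lambda>_. lborel))
      \<and> (\<forall>vs. length vs = length qs \<longrightarrow> 0 \<le> f X qs vs)
      \<and> (\<integral>\<^sup>+ z. ennreal (f X qs (map z [0..<length qs])) \<partial>PiM {..<length qs} (\<lambda>_. lborel)) = 1)"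

inductive params_ok :: "obs \<Rightarrow> pc \<Rightarrow> bool" where
  "leaf_density c X f \<Longrightarrow> params_ok X (Leaf c f)"
| "(\<forall>p\<in>set cs. 0 \<le> fst p X \<and> params_ok X (snd p)) \<Longrightarrow> (\<Sum>p\<leftarrow>cs. fst p X) = 1
     \<Longrightarrow> params_ok X (SumN cs)"
| "(\<forall>k\<in>set cs. params_ok X k) \<Longrightarrow> params_ok X (ProdN cs)"

definition qry_ch :: "nat \<Rightarrow> qry \<Rightarrow> qry" where
  "qry_ch c Q = filter (\<lambda>q. snd q = c) Q"
definition tgt_ch :: "nat \<Rightarrow> qry \<Rightarrow> real list \<Rightarrow> real list" where
  "tgt_ch c Q ys = map snd (filter (\<lambda>qv. snd (fst qv) = c) (zip Q ys))"
definition qry_rm :: "nat \<Rightarrow> qry \<Rightarrow> qry" where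
  "qry_rm c Q = filter (\<lambda>q. snd q \<noteq> c) Q"
definition tgt_rm :: "nat \<Rightarrow> qry \<Rightarrow> real list \<Rightarrow> real list" where
  "tgt_rm c Q ys = map snd (filter (\<lambda>qv. snd (fst qv) \<noteq> c) (zip Q ys))"

fun eval :: "obs \<Rightarrow> pc \<Rightarrow> qry \<Rightarrow> real list \<Rightarrow> real" where
  "eval X (Leaf c f) Q ys = f X (qry_ch c Q) (tgt_ch c Q ys)"
| "eval X (SumN cs) Q ys = (\<Sum>p\<leftarrow>cs. fst p X * eval X (snd p) Q ys)"
| "eval X (ProdN cs) Q ys = (\<Prod>k\<leftarrow>cs. eval X k Q ys)"

definition ch_idx :: "nat \<Rightarrow> qry \<Rightarrow> nat set" where
  "ch_idx c Q = {m. m < length Q \<and> snd (Q ! m) = c}"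

end

theory Submission
  imports Defs
begin


definition cidx :: "nat \<Rightarrow> qry \<Rightarrow> nat list" where
  "cidx c Q = filter (\<lambda>m. snd (Q ! m) = c) [0..<length Q]"

definition yz :: "nat \<Rightarrow> qry \<Rightarrow> real list \<Rightarrow> (nat \<Rightarrow> real) \<Rightarrow> real list" where
  "yz c Q ys z = map (\<lambda>m. if m \<in> ch_idx c Q then z m else ys ! m) [0..<length Q]"

lemma filter_nth: "filter P xs = map (nth xs) (filter (\<lambda>i. P (xs ! i)) [0..<length xs])"
proof (induction xs rule: rev_induct)
  case Nil
  then show ?case by simp
next
  case (snoc x xs)
  have "map ((!) (xs @ [x])) (filter (\<lambda>i. P ((xs @ [x]) ! i)) [0..<length xs])
      = map ((!) xs) (filter (\<lambda>i. P (xs ! i)) [0..<length xs])"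
    by (auto simp: nth_append intro!: map_cong filter_cong)
  then show ?case using snoc by simp
qed

lemma set_cidx: "set (cidx c Q) = ch_idx c Q"
  by (auto simp: cidx_def ch_idx_def)

lemma distinct_cidx: "distinct (cidx c Q)"
  by (simp add: cidx_def)

lemma qry_ch_cidx: "qry_ch c Q = map (nth Q) (cidx c Q)"
  unfolding qry_ch_def cidx_def by (rule filter_nth)

lemma tgt_ch_cidx: "length ys = length Q \<Longrightarrow> tgt_ch c Q ys = map (nth ys) (cidx c Q)"
  unfolding tgt_ch_def cidx_def
  apply (subst filter_nth)
  apply (auto intro!: map_cong filter_cong)
  done

lemma len_yz[simp]: "length (yz c Q ys z) = length Q"
  by (simp add: yz_def)

lemma nth_yz: "m < length Q \<Longrightarrow> yz c Q ys z ! m = (if m \<in> ch_idx c Q then z m else ys ! m)"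
  by (simp add: yz_def)

lemma fst_filter_zip: "length ys = length Q \<Longrightarrow>
   map fst (filter (\<lambda>qv. P (fst qv)) (zip Q ys)) = filter P Q"
  by (induction Q arbitrary: ys) (auto simp: length_Suc_conv)

lemma qry_ch_rm: "c' \<noteq> c \<Longrightarrow> qry_ch c' (qry_rm c Q) = qry_ch c' Q"
  by (auto simp: qry_ch_def qry_rm_def intro: filter_cong)

lemma qry_ch_rm_same: "qry_ch c (qry_rm c Q) = []"
  by (auto simp: qry_ch_def qry_rm_def filter_empty_conv)

lemma qry_rm_zip: "length ys = length Q \<Longrightarrow>
   qry_rm c Q = map fst (filter (\<lambda>qv. snd (fst qv) \<noteq> c) (zip Q ys))"
  unfolding qry_rm_def using fst_filter_zip[of ys Q "\<lambda>q. snd q \<noteq> c"] by simp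

lemma tgt_ch_rm: "length ys = length Q \<Longrightarrow> c' \<noteq> c \<Longrightarrow>
   tgt_ch c' (qry_rm c Q) (tgt_rm c Q ys) = tgt_ch c' Q ys"
  unfolding tgt_ch_def tgt_rm_def qry_rm_zip[of ys Q c] zip_map_fst_snd
  by (auto intro!: arg_cong[where f="map snd"] filter_cong)

lemma tgt_ch_rm_same: "length ys = length Q \<Longrightarrow>
   tgt_ch c (qry_rm c Q) (tgt_rm c Q ys) = []"
  unfolding tgt_ch_def tgt_rm_def qry_rm_zip[of ys Q c] zip_map_fst_snd
  by (auto simp: filter_empty_conv)

lemma len_rm: "length ys = length Q \<Longrightarrow> length (tgt_rm c Q ys) = length (qry_rm c Q)"
  unfolding tgt_rm_def qry_rm_zip[of ys Q c] by simp

lemma tgt_ch_yz: "length ys = length Q \<Longrightarrow> c' \<noteq> c \<Longrightarrow> tgt_ch c' Q (yz c Q ys z) = tgt_ch c' Q ys"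
  by (auto simp: tgt_ch_cidx nth_yz cidx_def ch_idx_def)

lemma tgt_ch_yz_same: "length ys = length Q \<Longrightarrow> tgt_ch c Q (yz c Q ys z) = map z (cidx c Q)"
  by (auto simp: tgt_ch_cidx nth_yz cidx_def ch_idx_def)



lemma distr_reindex:
  fixes g :: "'a \<Rightarrow> 'a"
  assumes fin: "finite I" and bij: "bij_betw g K I"
  shows "distr (PiM I (\<lambda>_. lborel)) (PiM K (\<lambda>_. lborel)) (\<lambda>x. \<lambda>i\<in>K. x (g i))
         = PiM K (\<lambda>_. (lborel::real measure))"
proof -
  interpret product_sigma_finite "\<lambda>_::'a. (lborel::real measure)"
    by standard
  have finK: "finite K" using bij fin bij_betw_finite by blast
  have meas: "(\<lambda>x. \<lambda>i\<in>K. x (g i)) \<in> measurable (PiM I (\<lambda>_. lborel)) (PiM K (\<lambda>_. (lborel::real measure)))"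
    using bij by (intro measurable_restrict measurable_component_singleton) (auto simp: bij_betw_def)
  show ?thesis
  proof (rule PiM_eqI[OF finK])
    show "sets (distr (PiM I (\<lambda>_. lborel)) (PiM K (\<lambda>_. (lborel::real measure))) (\<lambda>x. \<lambda>i\<in>K. x (g i))) = sets (PiM K (\<lambda>_. (lborel::real measure)))"
      by simp
  next
    fix A :: "'a \<Rightarrow> real set"
    assume A: "\<And>i. i \<in> K \<Longrightarrow> A i \<in> sets lborel"
    define h where "h = inv_into K g"
    have hb: "bij_betw h I K" unfolding h_def by (rule bij_betw_inv_into[OF bij])
    have gh: "\<And>j. j \<in> I \<Longrightarrow> g (h j) = j" unfolding h_def using bij
      by (simp add: bij_betw_inv_into_right)
    have hg: "\<And>i. i \<in> K \<Longrightarrow> h (g i) = i" unfolding h_def using bij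
      by (simp add: bij_betw_inv_into_left)
    have gK: "\<And>i. i \<in> K \<Longrightarrow> g i \<in> I" using bij by (auto simp: bij_betw_def)
    have hI: "\<And>j. j \<in> I \<Longrightarrow> h j \<in> K" using hb by (auto simp: bij_betw_def)
    have pre: "(\<lambda>x. \<lambda>i\<in>K. x (g i)) -` Pi\<^sub>E K A \<inter> space (PiM I (\<lambda>_. lborel))
        = Pi\<^sub>E I (\<lambda>j. A (h j))"
    proof (intro set_eqI iffI)
      fix x assume "x \<in> (\<lambda>x. \<lambda>i\<in>K. x (g i)) -` Pi\<^sub>E K A \<inter> space (PiM I (\<lambda>_. lborel))"
      then have x1: "x \<in> extensional I" and x2: "\<And>i. i \<in> K \<Longrightarrow> x (g i) \<in> A i"
        by (auto simp: space_PiM PiE_iff)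
      have "x j \<in> A (h j)" if "j \<in> I" for j
        using x2[OF hI[OF that]] gh[OF that] by simp
      then show "x \<in> Pi\<^sub>E I (\<lambda>j. A (h j))"
        using x1 by (auto simp: PiE_iff)
    next
      fix x assume "x \<in> Pi\<^sub>E I (\<lambda>j. A (h j))"
      then have x1: "x \<in> extensional I" and x2: "\<And>j. j \<in> I \<Longrightarrow> x j \<in> A (h j)"
        by (auto simp: PiE_iff)
      have "x (g i) \<in> A i" if "i \<in> K" for i
        using x2[OF gK[OF that]] hg[OF that] by simp
      then show "x \<in> (\<lambda>x. \<lambda>i\<in>K. x (g i)) -` Pi\<^sub>E K A \<inter> space (PiM I (\<lambda>_. lborel))"
        using x1 by (auto simp: space_PiM PiE_iff)
    qed
    have AK: "Pi\<^sub>E K A \<in> sets (PiM K (\<lambda>_. (lborel::real measure)))"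
      using A by (intro sets_PiM_I_finite finK) auto
    have ed: "emeasure (distr (PiM I (\<lambda>_. lborel)) (PiM K (\<lambda>_. (lborel::real measure))) (\<lambda>x. \<lambda>i\<in>K. x (g i))) (Pi\<^sub>E K A)
       = emeasure (PiM I (\<lambda>_. lborel)) ((\<lambda>x. \<lambda>i\<in>K. x (g i)) -` Pi\<^sub>E K A \<inter> space (PiM I (\<lambda>_. lborel)))"
      using meas AK by (rule emeasure_distr)
    have "emeasure (distr (PiM I (\<lambda>_. lborel)) (PiM K (\<lambda>_. (lborel::real measure))) (\<lambda>x. \<lambda>i\<in>K. x (g i))) (Pi\<^sub>E K A)
       = emeasure (PiM I (\<lambda>_. lborel)) (Pi\<^sub>E I (\<lambda>j. A (h j)))"
      using ed unfolding pre .
    also have "\<dots> = (\<Prod>j\<in>I. emeasure lborel (A (h j)))"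
      using A hI by (subst emeasure_PiM[OF fin]) auto
    also have "\<dots> = (\<Prod>i\<in>K. emeasure lborel (A i))"
      using prod.reindex_bij_betw[OF hb, of "\<lambda>i. emeasure lborel (A i)"] by simp
    finally show "emeasure (distr (PiM I (\<lambda>_. lborel)) (PiM K (\<lambda>_. (lborel::real measure))) (\<lambda>x. \<lambda>i\<in>K. x (g i))) (Pi\<^sub>E K A)
       = (\<Prod>i\<in>K. emeasure lborel (A i))" .
  qed
qed

lemma leaf_reindex:
  fixes h :: "real list \<Rightarrow> real" and idx :: "nat list"
  assumes d: "distinct idx" and I: "set idx = I"
    and meas: "(\<lambda>z. h (map z [0..<length idx])) \<in> borel_measurable (PiM {..<length idx} (\<lambda>_. lborel))"
  shows "(\<lambda>z. h (map z idx)) \<in> borel_measurable (PiM I (\<lambda>_. lborel))"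
    and "(\<integral>\<^sup>+z. ennreal (h (map z idx)) \<partial>PiM I (\<lambda>_. lborel))
       = (\<integral>\<^sup>+z. ennreal (h (map z [0..<length idx])) \<partial>PiM {..<length idx} (\<lambda>_. lborel))"
proof -
  let ?K = "{..<length idx}"
  let ?t = "\<lambda>x. \<lambda>i\<in>?K. x (idx ! i)"
  have bij: "bij_betw (nth idx) ?K I" using d I by (intro bij_betw_nth) auto
  have fin: "finite I" using I by auto
  have tm: "?t \<in> measurable (PiM I (\<lambda>_. lborel)) (PiM ?K (\<lambda>_. (lborel::real measure)))"
    using bij by (intro measurable_restrict measurable_component_singleton) (auto simp: bij_betw_def)
  have eq: "\<And>x. h (map (?t x) [0..<length idx]) = h (map x idx)"
  proof -
    fix x :: "nat \<Rightarrow> real"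
    have "map (?t x) [0..<length idx] = map (\<lambda>i. x (idx ! i)) [0..<length idx]" by auto
    also have "\<dots> = map x idx" by (rule nth_equalityI) auto
    finally show "h (map (?t x) [0..<length idx]) = h (map x idx)" by simp
  qed
  have "(\<lambda>x. h (map (?t x) [0..<length idx])) \<in> borel_measurable (PiM I (\<lambda>_. lborel))"
    using measurable_comp[OF tm meas] by (simp add: comp_def)
  then show "(\<lambda>z. h (map z idx)) \<in> borel_measurable (PiM I (\<lambda>_. lborel))"
    by (simp add: eq)
  have D: "distr (PiM I (\<lambda>_. lborel)) (PiM ?K (\<lambda>_. lborel)) ?t = PiM ?K (\<lambda>_. (lborel::real measure))"
    by (rule distr_reindex[OF fin bij])
  have "(\<integral>\<^sup>+z. ennreal (h (map z [0..<length idx])) \<partial>PiM ?K (\<lambda>_. lborel))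
     = (\<integral>\<^sup>+z. ennreal (h (map z [0..<length idx])) \<partial>distr (PiM I (\<lambda>_. lborel)) (PiM ?K (\<lambda>_. lborel)) ?t)"
    apply (subst D) apply (rule refl) done
  also have "\<dots> = (\<integral>\<^sup>+x. ennreal (h (map (?t x) [0..<length idx])) \<partial>PiM I (\<lambda>_. lborel))"
    by (rule nn_integral_distr[OF tm]) (unfold measurable_distr_eq1, rule measurable_compose[OF meas measurable_ennreal])
  also have "\<dots> = (\<integral>\<^sup>+z. ennreal (h (map z idx)) \<partial>PiM I (\<lambda>_. lborel))"
    by (simp add: eq)
  finally show "(\<integral>\<^sup>+z. ennreal (h (map z idx)) \<partial>PiM I (\<lambda>_. lborel))
       = (\<integral>\<^sup>+z. ennreal (h (map z [0..<length idx])) \<partial>PiM ?K (\<lambda>_. lborel))" by simp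
qed



lemma sum_map_nth: "sum_list (map g cs) = (\<Sum>i<length cs. g (cs ! i))"
  by (auto simp: sum_list_sum_nth atLeast0LessThan intro!: sum.cong)

lemma prod_map_nth: "prod_list (map g cs) = (\<Prod>i<length cs. g (cs ! i))"
  by (auto simp: prod.list_conv_set_nth atLeast0LessThan intro!: prod.cong)

lemma eval_nonneg:
  assumes "params_ok X n" "length ys = length Q"
  shows "0 \<le> eval X n Q ys"
  using assms
proof (induction X n arbitrary: Q ys rule: params_ok.induct)
  case (1 c X f)
  have "\<forall>q\<in>set (qry_ch c Q). snd q = c" by (simp add: qry_ch_def)
  moreover have "length (tgt_ch c Q ys) = length (qry_ch c Q)"
    using 1 by (simp add: tgt_ch_cidx qry_ch_cidx)
  ultimately show ?case using 1 by (simp add: leaf_density_def)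
next
  case (2 cs X)
  show ?case unfolding eval.simps
  proof (rule sum_list_nonneg)
    fix x assume "x \<in> set (map (\<lambda>p. fst p X * eval X (snd p) Q ys) cs)"
    then obtain p where p: "p \<in> set cs" and x: "x = fst p X * eval X (snd p) Q ys" by auto
    show "0 \<le> x" unfolding x using 2 p by (auto intro!: mult_nonneg_nonneg)
  qed
next
  case (3 cs X)
  then show ?case by (auto intro!: prod_list_nonneg)
qed

lemma eval_indep:
  assumes "c \<notin> scope n" "length ys = length Q"
  shows "eval X n Q (yz c Q ys z) = eval X n (qry_rm c Q) (tgt_rm c Q ys)"
  using assms
proof (induction n)
  case (Leaf c' f)
  then have "c' \<noteq> c" by simp
  then show ?case using Leaf by (simp add: qry_ch_rm tgt_ch_rm tgt_ch_yz)
next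
  case (SumN cs)
  have "\<And>p. p \<in> set cs \<Longrightarrow> eval X (snd p) Q (yz c Q ys z) = eval X (snd p) (qry_rm c Q) (tgt_rm c Q ys)"
  proof -
    fix p assume p: "p \<in> set cs"
    show "eval X (snd p) Q (yz c Q ys z) = eval X (snd p) (qry_rm c Q) (tgt_rm c Q ys)"
    proof (rule SumN.IH[OF p])
      show "snd p \<in> Basic_BNFs.snds p" by (cases p) (simp add: prod_set_simps)
      show "c \<notin> scope (snd p)" using SumN.prems p by auto
      show "length ys = length Q" using SumN.prems by simp
    qed
  qed
  then show ?case by (auto intro!: arg_cong[where f=sum_list] map_cong)
next
  case (ProdN cs)
  then show ?case by (auto intro!: arg_cong[where f=prod_list] map_cong)
qed

lemma meas_sum_list:
  "(\<And>p. p \<in> set cs \<Longrightarrow> (\<lambda>z. F p z) \<in> borel_measurable M) \<Longrightarrow>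
   (\<lambda>z. sum_list (map (\<lambda>p. F p z) cs) :: real) \<in> borel_measurable M"
  by (induction cs) auto

lemma meas_prod_list:
  "(\<And>p. p \<in> set cs \<Longrightarrow> (\<lambda>z. F p z) \<in> borel_measurable M) \<Longrightarrow>
   (\<lambda>z. prod_list (map (\<lambda>p. F p z) cs) :: real) \<in> borel_measurable M"
  by (induction cs) auto

lemma eval_meas:
  assumes "params_ok X n" "length ys = length Q"
  shows "(\<lambda>z. eval X n Q (yz c Q ys z)) \<in> borel_measurable (PiM (ch_idx c Q) (\<lambda>_. lborel))"
  using assms
proof (induction X n rule: params_ok.induct)
  case (1 c' X f)
  show ?case
  proof (cases "c' = c")
    case True
    have q: "\<forall>q\<in>set (qry_ch c Q). snd q = c" by (simp add: qry_ch_def)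
    have len: "length (qry_ch c Q) = length (cidx c Q)" by (simp add: qry_ch_cidx)
    have ld: "leaf_density c X f" using 1 True by simp
    have m0: "(\<lambda>z. f X (qry_ch c Q) (map z [0..<length (qry_ch c Q)])) \<in> borel_measurable (PiM {..<length (qry_ch c Q)} (\<lambda>_. lborel))"
      using ld q unfolding leaf_density_def by blast
    then have m: "(\<lambda>z. f X (qry_ch c Q) (map z [0..<length (cidx c Q)])) \<in> borel_measurable (PiM {..<length (cidx c Q)} (\<lambda>_. lborel))"
      by (simp only: len)
    show ?thesis
      using leaf_reindex(1)[OF distinct_cidx set_cidx m] True 1 by (simp add: tgt_ch_yz_same)
  next
    case False
    then show ?thesis using 1 by (simp add: tgt_ch_yz)
  qed
next
  case (2 cs X)
  then show ?case by (auto intro!: meas_sum_list borel_measurable_times)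
next
  case (3 cs X)
  then show ?case by (auto intro!: meas_prod_list)
qed


inductive_cases smoothS: "smooth (SumN cs)"
inductive_cases smoothP: "smooth (ProdN cs)"
inductive_cases decS: "decomposable (SumN cs)"
inductive_cases decP: "decomposable (ProdN cs)"
inductive_cases poL: "params_ok X (Leaf c f)"
inductive_cases poS: "params_ok X (SumN cs)"
inductive_cases poP: "params_ok X (ProdN cs)"

lemma leaf_empty:
  assumes "leaf_density c X f"
  shows "f X [] [] = 1"
proof -
  have "(\<integral>\<^sup>+ z. ennreal (f X [] (map z [0..<length ([]::qry)])) \<partial>PiM {..<length ([]::qry)} (\<lambda>_. (lborel::real measure))) = 1"
  proof -
    have "\<forall>qs. (\<forall>q\<in>set qs. snd q = c) \<longrightarrow> (\<integral>\<^sup>+ z. ennreal (f X qs (map z [0..<length qs])) \<partial>PiM {..<length qs} (\<lambda>_. (lborel::real measure))) = 1"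
      using assms unfolding leaf_density_def by blast
    from spec[OF this, of "[]"] show ?thesis by simp
  qed
  then have "(\<integral>\<^sup>+ z. ennreal (f X [] []) \<partial>PiM ({}::nat set) (\<lambda>_. (lborel::real measure))) = 1"
    by simp
  then have "ennreal (f X [] []) = 1"
    by (simp add: PiM_empty nn_integral_count_space_finite max.absorb2)
  then show ?thesis by (simp add: ennreal_eq_1)
qed


lemma ennreal_sum_mult:
  assumes "\<And>i. i \<in> A \<Longrightarrow> 0 \<le> a i" "\<And>i. i \<in> A \<Longrightarrow> 0 \<le> (b i :: real)"
  shows "ennreal (\<Sum>i\<in>A. a i * b i) = (\<Sum>i\<in>A. ennreal (a i) * ennreal (b i))"
proof -
  have "(\<Sum>i\<in>A. ennreal (a i) * ennreal (b i)) = (\<Sum>i\<in>A. ennreal (a i * b i))"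
    by (rule sum.cong) (auto simp: ennreal_mult assms)
  also have "\<dots> = ennreal (\<Sum>i\<in>A. a i * b i)"
    by (rule sum_ennreal) (auto intro: mult_nonneg_nonneg assms)
  finally show ?thesis by simp
qed

lemma eval_marg:
  assumes "smooth n" "decomposable n" "params_ok X n" "length ys = length Q" "c \<in> scope n"
  shows "(\<integral>\<^sup>+z. ennreal (eval X n Q (yz c Q ys z)) \<partial>PiM (ch_idx c Q) (\<lambda>_. lborel))
         = ennreal (eval X n (qry_rm c Q) (tgt_rm c Q ys))"
  using assms
proof (induction n rule: pc.induct)
  case (Leaf c' f)
  then have cc: "c' = c" by simp
  have ld: "leaf_density c X f" using Leaf.prems(3) cc by (auto elim: poL)
  have q: "\<forall>q\<in>set (qry_ch c Q). snd q = c" by (simp add: qry_ch_def)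
  have len: "length (qry_ch c Q) = length (cidx c Q)" by (simp add: qry_ch_cidx)
  have m0: "(\<lambda>z. f X (qry_ch c Q) (map z [0..<length (qry_ch c Q)])) \<in> borel_measurable (PiM {..<length (qry_ch c Q)} (\<lambda>_. lborel))"
    and i0: "(\<integral>\<^sup>+ z. ennreal (f X (qry_ch c Q) (map z [0..<length (qry_ch c Q)])) \<partial>PiM {..<length (qry_ch c Q)} (\<lambda>_. lborel)) = 1"
    using ld q unfolding leaf_density_def by blast+
  from m0 have m: "(\<lambda>z. f X (qry_ch c Q) (map z [0..<length (cidx c Q)])) \<in> borel_measurable (PiM {..<length (cidx c Q)} (\<lambda>_. lborel))"
    by (simp only: len)
  from i0 have i1: "(\<integral>\<^sup>+ z. ennreal (f X (qry_ch c Q) (map z [0..<length (cidx c Q)])) \<partial>PiM {..<length (cidx c Q)} (\<lambda>_. lborel)) = 1"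
    by (simp only: len)
  have "(\<integral>\<^sup>+z. ennreal (eval X (Leaf c' f) Q (yz c Q ys z)) \<partial>PiM (ch_idx c Q) (\<lambda>_. lborel))
      = (\<integral>\<^sup>+z. ennreal (f X (qry_ch c Q) (map z (cidx c Q))) \<partial>PiM (ch_idx c Q) (\<lambda>_. lborel))"
    using cc Leaf.prems(4) by (simp add: tgt_ch_yz_same)
  also have "\<dots> = 1"
    using leaf_reindex(2)[OF distinct_cidx set_cidx m] i1 by simp
  also have "1 = ennreal (eval X (Leaf c' f) (qry_rm c Q) (tgt_rm c Q ys))"
    using cc Leaf.prems(4) leaf_empty[OF ld] by (simp add: qry_ch_rm_same tgt_ch_rm_same)
  finally show ?case .
next
  case (SumN cs)
  have sm0: "\<forall>p\<in>set cs. smooth (snd p)"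
    and sc0: "\<forall>p\<in>set cs. \<forall>q\<in>set cs. scope (snd p) = scope (snd q)"
    using SumN.prems(1) by (auto elim!: smoothS simp del: prod.collapse)
  have sm: "\<And>p. p \<in> set cs \<Longrightarrow> smooth (snd p)"
    and sc: "\<And>p q. p \<in> set cs \<Longrightarrow> q \<in> set cs \<Longrightarrow> scope (snd p) = scope (snd q)"
    using sm0 sc0 by blast+
  have dc: "\<And>p. p \<in> set cs \<Longrightarrow> decomposable (snd p)"
    using SumN.prems(2) by (auto elim: decS)
  have po: "\<And>p. p \<in> set cs \<Longrightarrow> 0 \<le> fst p X \<and> params_ok X (snd p)"
    using SumN.prems(3) by (auto elim: poS)
  obtain p0 where p0: "p0 \<in> set cs" "c \<in> scope (snd p0)" using SumN.prems(5) by auto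
  have cin: "\<And>p. p \<in> set cs \<Longrightarrow> c \<in> scope (snd p)" using p0 sc by blast
  have IH: "\<And>p. p \<in> set cs \<Longrightarrow> (\<integral>\<^sup>+z. ennreal (eval X (snd p) Q (yz c Q ys z)) \<partial>PiM (ch_idx c Q) (\<lambda>_. lborel))
         = ennreal (eval X (snd p) (qry_rm c Q) (tgt_rm c Q ys))"
  proof -
    fix p assume p: "p \<in> set cs"
    show "(\<integral>\<^sup>+z. ennreal (eval X (snd p) Q (yz c Q ys z)) \<partial>PiM (ch_idx c Q) (\<lambda>_. lborel))
         = ennreal (eval X (snd p) (qry_rm c Q) (tgt_rm c Q ys))"
    proof (rule SumN.IH[OF p])
      show "snd p \<in> Basic_BNFs.snds p" by (cases p) (simp add: prod_set_simps)
    qed (use p sm dc po cin SumN.prems(4) in auto)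
  qed
  define w where "w i = fst (cs ! i) X" for i
  define E where "E i z = eval X (snd (cs ! i)) Q (yz c Q ys z)" for i z
  define R where "R i = eval X (snd (cs ! i)) (qry_rm c Q) (tgt_rm c Q ys)" for i
  have inset: "\<And>i. i < length cs \<Longrightarrow> cs ! i \<in> set cs" by simp
  have w0: "\<And>i. i < length cs \<Longrightarrow> 0 \<le> w i" using po inset unfolding w_def by blast
  have E0: "\<And>i z. i < length cs \<Longrightarrow> 0 \<le> E i z"
    unfolding E_def using po inset SumN.prems(4) by (intro eval_nonneg) auto
  have R0: "\<And>i. i < length cs \<Longrightarrow> 0 \<le> R i"
    unfolding R_def using po inset SumN.prems(4) by (intro eval_nonneg) (auto simp: len_rm)
  have Em: "\<And>i. i < length cs \<Longrightarrow> (\<lambda>z. ennreal (E i z)) \<in> borel_measurable (PiM (ch_idx c Q) (\<lambda>_. lborel))"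
    unfolding E_def using po inset SumN.prems(4)
    by (intro measurable_compose[OF eval_meas measurable_ennreal]) auto
  have IH': "\<And>i. i < length cs \<Longrightarrow> (\<integral>\<^sup>+z. ennreal (E i z) \<partial>PiM (ch_idx c Q) (\<lambda>_. lborel)) = ennreal (R i)"
    unfolding E_def R_def using IH inset by blast
  have e1: "\<And>z. ennreal (eval X (SumN cs) Q (yz c Q ys z)) = (\<Sum>i<length cs. ennreal (w i) * ennreal (E i z))"
  proof -
    fix z
    have "eval X (SumN cs) Q (yz c Q ys z) = (\<Sum>i<length cs. w i * E i z)"
      by (simp add: sum_map_nth w_def E_def)
    then have "ennreal (eval X (SumN cs) Q (yz c Q ys z)) = ennreal (\<Sum>i<length cs. w i * E i z)"
      by (rule arg_cong)
    also have "\<dots> = (\<Sum>i<length cs. ennreal (w i) * ennreal (E i z))"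
      by (rule ennreal_sum_mult) (auto intro: w0 E0)
    finally show "ennreal (eval X (SumN cs) Q (yz c Q ys z)) = (\<Sum>i<length cs. ennreal (w i) * ennreal (E i z))" .
  qed
  have e2: "ennreal (eval X (SumN cs) (qry_rm c Q) (tgt_rm c Q ys)) = (\<Sum>i<length cs. ennreal (w i) * ennreal (R i))"
  proof -
    have "eval X (SumN cs) (qry_rm c Q) (tgt_rm c Q ys) = (\<Sum>i<length cs. w i * R i)"
      by (simp add: sum_map_nth w_def R_def)
    then have "ennreal (eval X (SumN cs) (qry_rm c Q) (tgt_rm c Q ys)) = ennreal (\<Sum>i<length cs. w i * R i)"
      by (rule arg_cong)
    also have "\<dots> = (\<Sum>i<length cs. ennreal (w i) * ennreal (R i))"
      by (rule ennreal_sum_mult) (auto intro: w0 R0)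
    finally show ?thesis .
  qed
  have "(\<integral>\<^sup>+z. ennreal (eval X (SumN cs) Q (yz c Q ys z)) \<partial>PiM (ch_idx c Q) (\<lambda>_. lborel))
     = (\<integral>\<^sup>+z. (\<Sum>i<length cs. ennreal (w i) * ennreal (E i z)) \<partial>PiM (ch_idx c Q) (\<lambda>_. lborel))"
    by (simp only: e1)
  also have "\<dots> = (\<Sum>i<length cs. (\<integral>\<^sup>+z. ennreal (w i) * ennreal (E i z) \<partial>PiM (ch_idx c Q) (\<lambda>_. lborel)))"
    by (rule nn_integral_sum) (use Em in auto)
  also have "\<dots> = (\<Sum>i<length cs. ennreal (w i) * (\<integral>\<^sup>+z. ennreal (E i z) \<partial>PiM (ch_idx c Q) (\<lambda>_. lborel)))"
    by (rule sum.cong) (use Em in \<open>auto intro!: nn_integral_cmult\<close>)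
  also have "\<dots> = (\<Sum>i<length cs. ennreal (w i) * ennreal (R i))"
    by (rule sum.cong) (use IH' in auto)
  also have "\<dots> = ennreal (eval X (SumN cs) (qry_rm c Q) (tgt_rm c Q ys))"
    by (simp only: e2)
  finally show ?case .
next
  case (ProdN cs)
  have sm: "\<And>k. k \<in> set cs \<Longrightarrow> smooth k"
    using ProdN.prems(1) by (auto elim: smoothP)
  have dc: "\<And>k. k \<in> set cs \<Longrightarrow> decomposable k"
    and disj: "\<And>i j. i < length cs \<Longrightarrow> j < length cs \<Longrightarrow> i \<noteq> j \<Longrightarrow> scope (cs ! i) \<inter> scope (cs ! j) = {}"
  proof -
    have "(\<forall>k\<in>set cs. decomposable k) \<and> (\<forall>i<length cs. \<forall>j<length cs. i \<noteq> j \<longrightarrow> scope (cs ! i) \<inter> scope (cs ! j) = {})"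
      using ProdN.prems(2) by (rule decP) blast
    then show "\<And>k. k \<in> set cs \<Longrightarrow> decomposable k"
      and "\<And>i j. i < length cs \<Longrightarrow> j < length cs \<Longrightarrow> i \<noteq> j \<Longrightarrow> scope (cs ! i) \<inter> scope (cs ! j) = {}"
      by blast+
  qed
  have po: "\<And>k. k \<in> set cs \<Longrightarrow> params_ok X k"
    using ProdN.prems(3) by (auto elim: poP)
  obtain k0 where k0: "k0 \<in> set cs" "c \<in> scope k0" using ProdN.prems(5) by auto
  then obtain j where j: "j < length cs" "cs ! j = k0" by (auto simp: in_set_conv_nth)
  have cj: "c \<in> scope (cs ! j)" using j k0 by simp
  have cnot: "\<And>i. i < length cs \<Longrightarrow> i \<noteq> j \<Longrightarrow> c \<notin> scope (cs ! i)"
    using disj j(1) cj by blast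
  have inset: "\<And>i. i < length cs \<Longrightarrow> cs ! i \<in> set cs" by simp
  define E where "E i z = eval X (cs ! i) Q (yz c Q ys z)" for i z
  define R where "R i = eval X (cs ! i) (qry_rm c Q) (tgt_rm c Q ys)" for i
  define K where "K = (\<Prod>i\<in>{..<length cs} - {j}. R i)"
  have E0: "\<And>i z. i < length cs \<Longrightarrow> 0 \<le> E i z"
    unfolding E_def using po inset ProdN.prems(4) by (intro eval_nonneg) auto
  have R0: "\<And>i. i < length cs \<Longrightarrow> 0 \<le> R i"
    unfolding R_def using po inset ProdN.prems(4) by (intro eval_nonneg) (auto simp: len_rm)
  have K0: "0 \<le> K" unfolding K_def using R0 by (intro prod_nonneg) auto
  have Em: "(\<lambda>z. ennreal (E j z)) \<in> borel_measurable (PiM (ch_idx c Q) (\<lambda>_. lborel))"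
    unfolding E_def using po inset j(1) ProdN.prems(4)
    by (intro measurable_compose[OF eval_meas measurable_ennreal]) auto
  have IHj: "(\<integral>\<^sup>+z. ennreal (E j z) \<partial>PiM (ch_idx c Q) (\<lambda>_. lborel)) = ennreal (R j)"
    unfolding E_def R_def
    by (rule ProdN.IH[OF inset[OF j(1)]]) (use sm dc po inset j(1) cj ProdN.prems(4) in auto)
  have e1: "\<And>z. eval X (ProdN cs) Q (yz c Q ys z) = E j z * K"
  proof -
    fix z
    have "eval X (ProdN cs) Q (yz c Q ys z) = (\<Prod>i<length cs. E i z)"
      by (simp add: prod_map_nth E_def)
    also have "\<dots> = E j z * (\<Prod>i\<in>{..<length cs} - {j}. E i z)"
      using j(1) by (subst prod.remove[of _ j]) auto
    also have "(\<Prod>i\<in>{..<length cs} - {j}. E i z) = K"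
      unfolding K_def E_def R_def using cnot ProdN.prems(4)
      by (intro prod.cong) (auto intro!: eval_indep)
    finally show "eval X (ProdN cs) Q (yz c Q ys z) = E j z * K" .
  qed
  have e2: "eval X (ProdN cs) (qry_rm c Q) (tgt_rm c Q ys) = R j * K"
  proof -
    have "eval X (ProdN cs) (qry_rm c Q) (tgt_rm c Q ys) = (\<Prod>i<length cs. R i)"
      by (simp add: prod_map_nth R_def)
    also have "\<dots> = R j * K"
      unfolding K_def using j(1) by (subst prod.remove[of _ j]) auto
    finally show ?thesis .
  qed
  have "(\<integral>\<^sup>+z. ennreal (eval X (ProdN cs) Q (yz c Q ys z)) \<partial>PiM (ch_idx c Q) (\<lambda>_. lborel))
      = (\<integral>\<^sup>+z. ennreal (E j z) * ennreal K \<partial>PiM (ch_idx c Q) (\<lambda>_. lborel))"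
    by (rule nn_integral_cong) (simp only: e1 ennreal_mult[OF E0[OF j(1)] K0])
  also have "\<dots> = (\<integral>\<^sup>+z. ennreal (E j z) \<partial>PiM (ch_idx c Q) (\<lambda>_. lborel)) * ennreal K"
    by (rule nn_integral_multc[OF Em])
  also have "\<dots> = ennreal (R j * K)"
    using IHj R0 j(1) K0 by (simp add: ennreal_mult)
  also have "\<dots> = ennreal (eval X (ProdN cs) (qry_rm c Q) (tgt_rm c Q ys))"
    by (simp only: e2)
  finally show ?case .
qed




theorem lemmaA1:
  fixes C :: nat and root :: pc
  assumes "smooth root" and "decomposable root"
    and "\<forall>X. params_ok X root"
    and "scope root = {1..C}"
  shows "\<forall>(X::obs) (Q::qry) (ys::real list) c.
           length ys = length Q \<longrightarrow> (\<forall>q\<in>set Q. snd q \<in> {1..C}) \<longrightarrow> c \<in> {1..C} \<longrightarrow>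
           (\<integral>\<^sup>+ z. ennreal (eval X root Q
                  (map (\<lambda>m. if m \<in> ch_idx c Q then z m else ys ! m) [0..<length Q]))
              \<partial>PiM (ch_idx c Q) (\<lambda>_. lborel))
           = ennreal (eval X root (qry_rm c Q) (tgt_rm c Q ys))"
proof (intro allI impI)
  fix X :: obs and Q :: qry and ys :: "real list" and c :: nat
  assume len: "length ys = length Q" and cC: "c \<in> {1..C}"
  have cs: "c \<in> scope root" using assms(4) cC by simp
  have po: "params_ok X root" using assms(3) by blast
  show "(\<integral>\<^sup>+ z. ennreal (eval X root Q
                  (map (\<lambda>m. if m \<in> ch_idx c Q then z m else ys ! m) [0..<length Q]))
              \<partial>PiM (ch_idx c Q) (\<lambda>_. lborel))
           = ennreal (eval X root (qry_rm c Q) (tgt_rm c Q ys))"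
    using eval_marg[OF assms(1,2) po len cs] unfolding yz_def .
qed

end
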